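(* Let $m,n\geq 2$ and let $V\subset [m]\times[n]$. Then: (i) if $V$ is a forest with $k$ connected components, then $V$ is complete if and only if $|V|=m+n-k$; (ii) if $|V|=m+n-1$, then $V$ is a tree if and only if $V$ is complete and connected; (iii) if $V$ is complete and connected, then $|V|\geq m+n-1$, and $|V|=m+n-1$ if and only if $V$ is a tree.
   Context: $[m]=\{1,\dots,m\}$. $G_{m,n}$ is the graph with vertex set $[m]\times[n]$ in which two distinct vertices $u=(u_1,u_2)$, $v=(v_1,v_2)$ are adjacent iff $u_1=v_1$ or $u_2=v_2$ (same row or same column). A subset $V\subset[m]\times[n]$ is regarded as the induced subgraph of $G_{m,n}$; a path in $V$ is a sequence of vertices of $V$ in which consecutive vertices are adjacent; $V$ is connected if any two distinct vertices of $V$ are joined by a path in $V$, and connected components are understood for this induced graph. A circuit is a cyclic sequence $v_0,v_1,\dots,v_{s-1}$ ($s\ge 4$) of pairwise distinct vertices $v_k=(i_k,j_k)$ such that, with indices taken modulo $s$, $v_k$ and $v_{k+1}$ are adjacent and $(i_{k+2}-i_k)(j_{k+2}-j_k)\neq 0$ for every $k$ (no three cyclically consecutive vertices lie in one row or one column). $V$ is a forest if it contains no circuit, and a tree if it is a connected forest. $V$ is complete if $\{i:(i,j)\in V\}=[m]$ and $\{j:(i,j)\in V\}=[n]$. *)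

theory Defs
  imports Main
begin

type_synonym cell = "nat \<times> nat"

definition grid :: "nat \<Rightarrow> nat \<Rightarrow> cell set" where
  "grid m n = {1..m} \<times> {1..n}"

definition rook_adj :: "cell \<Rightarrow> cell \<Rightarrow> bool" where
  "rook_adj u v \<longleftrightarrow> u \<noteq> v \<and> (fst u = fst v \<or> snd u = snd v)"

definition is_path_in :: "cell set \<Rightarrow> cell list \<Rightarrow> bool" where
  "is_path_in V p \<longleftrightarrow> p \<noteq> [] \<and> set p \<subseteq> V \<and>
     (\<forall>i. Suc i < length p \<longrightarrow> rook_adj (p ! i) (p ! Suc i))"

definition joined_in :: "cell set \<Rightarrow> cell \<Rightarrow> cell \<Rightarrow> bool" where
  "joined_in V u v \<longleftrightarrow> (\<exists>p. is_path_in V p \<and> hd p = u \<and> last p = v)"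

definition connected_set :: "cell set \<Rightarrow> bool" where
  "connected_set V \<longleftrightarrow> (\<forall>u\<in>V. \<forall>v\<in>V. u \<noteq> v \<longrightarrow> joined_in V u v)"

definition components :: "cell set \<Rightarrow> cell set set" where
  "components V = V // {(u, v). u \<in> V \<and> v \<in> V \<and> joined_in V u v}"

text \<open>A circuit: a cyclic sequence of s \<ge> 4 pairwise distinct vertices of V,
  cyclically consecutive ones adjacent, and no three cyclically consecutive ones
  in a single row or column.\<close>
definition is_circuit_in :: "cell set \<Rightarrow> cell list \<Rightarrow> bool" where
  "is_circuit_in V c \<longleftrightarrow> length c \<ge> 4 \<and> distinct c \<and> set c \<subseteq> V \<and>
     (\<forall>k < length c.
        rook_adj (c ! k) (c ! ((k + 1) mod length c)) \<and>
        (int (fst (c ! ((k + 2) mod length c))) - int (fst (c ! k))) *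
        (int (snd (c ! ((k + 2) mod length c))) - int (snd (c ! k))) \<noteq> 0)"

definition forest :: "cell set \<Rightarrow> bool" where
  "forest V \<longleftrightarrow> \<not> (\<exists>c. is_circuit_in V c)"

definition tree :: "cell set \<Rightarrow> bool" where
  "tree V \<longleftrightarrow> connected_set V \<and> forest V"

definition complete :: "nat \<Rightarrow> nat \<Rightarrow> cell set \<Rightarrow> bool" where
  "complete m n V \<longleftrightarrow> fst ` V = {1..m} \<and> snd ` V = {1..n}"

end

theory Submission
  imports Defs
begin

lemma path_iff: "is_path_in V p \<longleftrightarrow> p \<noteq> [] \<and> set p \<subseteq> V \<and> successively rook_adj p"
  unfolding is_path_in_def successively_conv_nth by blast

lemma rook_adj_sym: "rook_adj u v \<Longrightarrow> rook_adj v u"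
  unfolding rook_adj_def by auto

lemma joined_refl: "u \<in> V \<Longrightarrow> joined_in V u u"
  unfolding joined_in_def by (rule exI[of _ "[u]"]) (simp add: path_iff)

lemma joined_sym: "joined_in V u v \<Longrightarrow> joined_in V v u"
  unfolding joined_in_def path_iff
  apply clarify
  subgoal for p by (rule exI[of _ "rev p"]) (auto simp: hd_rev last_rev rook_adj_sym elim: successively_mono)
  done

lemma joined_trans: "joined_in V u v \<Longrightarrow> joined_in V v w \<Longrightarrow> joined_in V u w"
  unfolding joined_in_def path_iff
  apply clarify
  subgoal for p q
    apply (rule exI[of _ "p @ tl q"])
    apply (cases q)
     apply (auto simp: successively_append_iff successively_Cons)
    done
  done

lemma joined_mono: "joined_in V u v \<Longrightarrow> V \<subseteq> W \<Longrightarrow> joined_in W u v"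
  unfolding joined_in_def path_iff by blast

lemma joined_in_V: "joined_in V u v \<Longrightarrow> u \<in> V \<and> v \<in> V"
  unfolding joined_in_def path_iff by (metis hd_in_set last_in_set subsetD)

lemma joined_adj: "u \<in> V \<Longrightarrow> v \<in> V \<Longrightarrow> rook_adj u v \<Longrightarrow> joined_in V u v"
  unfolding joined_in_def path_iff by (rule exI[of _ "[u,v]"]) auto

lemma path_joined_elem: "is_path_in V p \<Longrightarrow> x \<in> set p \<Longrightarrow> joined_in V (hd p) x"
proof -
  assume p: "is_path_in V p" and x: "x \<in> set p"
  then obtain i where i: "i < length p" "p ! i = x" by (auto simp: in_set_conv_nth)
  have "is_path_in V (take (Suc i) p)"
    using p unfolding is_path_in_def by (auto dest: in_set_takeD)
  moreover have "hd (take (Suc i) p) = hd p" using p by (cases p) (auto simp: is_path_in_def)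
  moreover have "last (take (Suc i) p) = x" using i by (simp add: take_Suc_conv_app_nth)
  ultimately show ?thesis unfolding joined_in_def by blast
qed


lemma circuit_mono: "is_circuit_in W c \<Longrightarrow> W \<subseteq> W' \<Longrightarrow> is_circuit_in W' c"
  unfolding is_circuit_in_def by blast

lemma forest_mono: "forest W' \<Longrightarrow> W \<subseteq> W' \<Longrightarrow> forest W"
  unfolding forest_def using circuit_mono by blast

lemma circuit_line:
  assumes c: "is_circuit_in (insert e W) c" and eW: "e \<notin> W"
    and line: "(\<forall>v\<in>W. rook_adj e v \<longrightarrow> fst v = fst e) \<or> (\<forall>v\<in>W. rook_adj e v \<longrightarrow> snd v = snd e)"
  shows "is_circuit_in W c"
proof (cases "e \<in> set c")
  case False
  then show ?thesis using c unfolding is_circuit_in_def by blast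
next
  case True
  define s where "s = length c"
  have s4: "s \<ge> 4" and dist: "distinct c" and sub: "set c \<subseteq> insert e W"
    using c unfolding is_circuit_in_def s_def by auto
  have cond: "\<And>k. k < s \<Longrightarrow> rook_adj (c ! k) (c ! ((k + 1) mod s)) \<and>
        (int (fst (c ! ((k + 2) mod s))) - int (fst (c ! k))) *
        (int (snd (c ! ((k + 2) mod s))) - int (snd (c ! k))) \<noteq> 0"
    using c unfolding is_circuit_in_def s_def by blast
  obtain k where k: "k < s" "c ! k = e" using True unfolding s_def by (auto simp: in_set_conv_nth)
  define p where "p = (k + s - 1) mod s"
  have p: "p < s" using s4 unfolding p_def by simp
  have p1: "(p + 1) mod s = k"
  proof -
    have "(p + 1) mod s = (k + s - 1 + 1) mod s" unfolding p_def by (simp add: mod_Suc_eq mod_add_left_eq)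
    also have "k + s - 1 + 1 = k + s" using s4 by simp
    finally show ?thesis using k by simp
  qed
  have p2: "(p + 2) mod s = (k + 1) mod s"
  proof -
    have "(p + 2) mod s = (k + s - 1 + 2) mod s" unfolding p_def by (metis mod_add_left_eq)
    also have "k + s - 1 + 2 = (k + 1) + s" using s4 by simp
    finally have "(p + 2) mod s = ((k + 1) + s) mod s" .
    then show ?thesis by (simp only: mod_add_self2)
  qed
  have q: "(k + 1) mod s < s" using s4 by simp
  have qk: "(k + 1) mod s \<noteq> k"
  proof (cases "k + 1 < s")
    case True then show ?thesis by simp
  next
    case False then have "k + 1 = s" using k by simp
    then show ?thesis using s4 by simp
  qed
  have pk: "p \<noteq> k" using p1 qk by auto
  have a1: "rook_adj (c ! p) e" using cond[OF p] p1 k by simp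
  have a2: "rook_adj e (c ! ((k + 1) mod s))" using cond[OF k(1)] k by simp
  have cp: "c ! p \<in> W" using sub p pk dist k unfolding s_def
    by (metis insertE nth_eq_iff_index_eq nth_mem subsetD)
  have cq: "c ! ((k + 1) mod s) \<in> W" using sub q qk dist k unfolding s_def
    by (metis insertE nth_eq_iff_index_eq nth_mem subsetD)
  have "(int (fst (c ! ((p + 2) mod s))) - int (fst (c ! p))) *
        (int (snd (c ! ((p + 2) mod s))) - int (snd (c ! p))) = 0"
  proof -
    have a1': "rook_adj e (c ! p)" using a1 by (rule rook_adj_sym)
    from line show ?thesis
    proof
      assume L: "\<forall>v\<in>W. rook_adj e v \<longrightarrow> fst v = fst e"
      have "fst (c ! p) = fst e" "fst (c ! ((k + 1) mod s)) = fst e" using L cp cq a1' a2 by auto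
      then show ?thesis using p2 by simp
    next
      assume L: "\<forall>v\<in>W. rook_adj e v \<longrightarrow> snd v = snd e"
      have "snd (c ! p) = snd e" "snd (c ! ((k + 1) mod s)) = snd e" using L cp cq a1' a2 by auto
      then show ?thesis using p2 by simp
    qed
  qed
  then show ?thesis using cond[OF p] by blast
qed


lemma slice_path:
  assumes p: "is_path_in W p" and ij: "i \<le> j" "j < length p"
    and jn: "i = 0 \<or> rook_adj (p ! (i - 1)) (p ! j)"
  shows "is_path_in W (take i p @ drop j p)"
    "last (take i p @ drop j p) = last p"
    "hd (take i p @ drop j p) = (if i = 0 then p ! j else p ! 0)"
    "length (take i p @ drop j p) = i + length p - j"
proof -
  have sp: "successively rook_adj p" "set p \<subseteq> W" "p \<noteq> []" using p by (auto simp: path_iff)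
  have st: "successively rook_adj (take i p)" "successively rook_adj (drop j p)"
    using sp(1) successively_append_iff[of rook_adj "take i p" "drop i p"]
      successively_append_iff[of rook_adj "take j p" "drop j p"] by auto
  have hdd: "hd (drop j p) = p ! j" using ij by (simp add: hd_drop_conv_nth)
  have lt: "i > 0 \<Longrightarrow> last (take i p) = p ! (i - 1)"
    using ij by (cases i) (auto simp: take_Suc_conv_app_nth)
  show "is_path_in W (take i p @ drop j p)"
    using ij sp st jn hdd lt
  proof (cases "i = 0")
    case True then show ?thesis using ij sp st by (auto simp: path_iff dest: in_set_dropD)
  next
    case False
    have "successively rook_adj (take i p @ drop j p)"
      unfolding successively_append_iff using st jn lt hdd False by auto
    moreover have "set (take i p @ drop j p) \<subseteq> W" using sp(2)
      by (auto dest: in_set_takeD in_set_dropD)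
    ultimately show ?thesis using ij False by (simp add: path_iff)
  qed
  show "last (take i p @ drop j p) = last p" using ij by simp
  show "hd (take i p @ drop j p) = (if i = 0 then p ! j else p ! 0)"
    using ij hdd by (cases i; cases p) auto
  show "length (take i p @ drop j p) = i + length p - j" using ij by simp
qed

lemma prefix_path:
  assumes p: "is_path_in W p" and k: "k < length p"
  shows "is_path_in W (take (Suc k) p)" "last (take (Suc k) p) = p ! k"
    "hd (take (Suc k) p) = p ! 0" "length (take (Suc k) p) = Suc k"
proof -
  have sp: "successively rook_adj p" "set p \<subseteq> W" "p \<noteq> []" using p by (auto simp: path_iff)
  have st: "successively rook_adj (take (Suc k) p)"
    using sp(1) successively_append_iff[of rook_adj "take (Suc k) p" "drop (Suc k) p"] by auto
  show "is_path_in W (take (Suc k) p)" unfolding path_iff using st sp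
    by (auto dest: in_set_takeD)
  show "last (take (Suc k) p) = p ! k" using k by (simp add: take_Suc_conv_app_nth)
  show "hd (take (Suc k) p) = p ! 0" using k by (cases p) auto
  show "length (take (Suc k) p) = Suc k" using k by simp
qed

lemma differ_prod:
  assumes "fst x \<noteq> fst y" "snd x \<noteq> snd y"
  shows "(int (fst y) - int (fst x)) * (int (snd y) - int (snd x)) \<noteq> 0"
  using assms by simp

lemma nadj_differ: "u \<noteq> v \<Longrightarrow> \<not> rook_adj u v \<Longrightarrow> fst u \<noteq> fst v \<and> snd u \<noteq> snd v"
  unfolding rook_adj_def by auto


lemma circuit_close:
  assumes eW: "e \<notin> W" and a: "a \<in> W" "fst a = fst e" and b: "b \<in> W" "snd b = snd e"
    and ab: "joined_in W a b"
  shows "\<exists>c. is_circuit_in (insert e W) c"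
proof -
  define P where "P q \<longleftrightarrow> is_path_in W q \<and> fst (hd q) = fst e \<and> snd (last q) = snd e" for q
  obtain p0 where "P p0" using ab a b unfolding P_def joined_in_def by auto
  then obtain p where Pp: "P p" and minp: "\<And>q. P q \<Longrightarrow> length p \<le> length q"
    using ex_has_least_nat[of P p0 length] by blast
  define L where "L = length p"
  have pp: "is_path_in W p" and sp: "successively rook_adj p" "set p \<subseteq> W" "p \<noteq> []"
    using Pp by (auto simp: P_def path_iff)
  have L0: "L > 0" using sp unfolding L_def by simp
  have inW: "\<And>k. k < L \<Longrightarrow> p ! k \<in> W" using sp unfolding L_def by auto
  have ne: "\<And>k. k < L \<Longrightarrow> p ! k \<noteq> e" using inW eW by blast
  have hd0: "fst (p ! 0) = fst e" using Pp sp unfolding P_def by (simp add: hd_conv_nth)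
  have lastL: "snd (p ! (L - 1)) = snd e" using Pp sp unfolding P_def L_def by (simp add: last_conv_nth)
  have adjp: "\<And>k. Suc k < L \<Longrightarrow> rook_adj (p ! k) (p ! Suc k)"
    using sp(1) unfolding L_def by (simp add: successively_nth)
  have r: "fst (p ! k) \<noteq> fst e" if "0 < k" "k < L" for k
  proof
    assume h: "fst (p ! k) = fst e"
    have "P (take 0 p @ drop k p)" using slice_path[OF pp, of 0 k] that h Pp unfolding P_def L_def by auto
    then have "L \<le> 0 + L - k" using minp slice_path(4)[OF pp, of 0 k] that unfolding L_def by fastforce
    then show False using that by simp
  qed
  have cl: "snd (p ! k) \<noteq> snd e" if "k < L - 1" for k
  proof
    assume h: "snd (p ! k) = snd e"
    have k: "k < length p" using that unfolding L_def by simp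
    have "P (take (Suc k) p)" using prefix_path[OF pp k] h hd0 unfolding P_def by auto
    then have "L \<le> Suc k" using minp prefix_path(4)[OF pp k] unfolding L_def by fastforce
    then show False using that by simp
  qed
  have neq: "p ! i \<noteq> p ! j" if "i < j" "j < L" for i j
  proof
    assume h: "p ! i = p ! j"
    show False
    proof (cases "i = 0")
      case True
      have "P (take 0 p @ drop j p)" using slice_path[OF pp, of 0 j] that h hd0 True Pp
        unfolding P_def L_def by auto
      then have "L \<le> 0 + L - j" using minp slice_path(4)[OF pp, of 0 j] that unfolding L_def by fastforce
      then show False using that by simp
    next
      case False
      have adj: "rook_adj (p ! (i - 1)) (p ! j)" using adjp[of "i - 1"] False that h by simp
      have "P (take i p @ drop j p)" using slice_path[OF pp, of i j] that adj hd0 False Pp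
        unfolding P_def L_def by auto
      then have "L \<le> i + L - j" using minp slice_path(4)[OF pp, of i j] that adj unfolding L_def by fastforce
      then show False using that by simp
    qed
  qed
  have nadj: "\<not> rook_adj (p ! i) (p ! j)" if "i + 2 \<le> j" "j < L" for i j
  proof
    assume adj: "rook_adj (p ! i) (p ! j)"
    have "P (take (Suc i) p @ drop j p)" using slice_path[OF pp, of "Suc i" j] that adj hd0 Pp
      unfolding P_def L_def by auto
    then have "L \<le> Suc i + L - j" using minp slice_path(4)[OF pp, of "Suc i" j] that adj unfolding L_def by fastforce
    then show False using that by simp
  qed
  have dif: "fst (p ! i) \<noteq> fst (p ! j) \<and> snd (p ! i) \<noteq> snd (p ! j)" if "i + 2 \<le> j" "j < L" for i j
    using nadj_differ[OF neq nadj] that by simp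
  have L1: "L \<noteq> 1"
  proof
    assume "L = 1"
    then have "fst (p ! 0) = fst e" "snd (p ! 0) = snd e" using hd0 lastL by auto
    then have "p ! 0 = e" by (simp add: prod_eq_iff)
    then show False using ne L0 by blast
  qed
  have L2: "L \<noteq> 2"
  proof
    assume L: "L = 2"
    then have "rook_adj (p ! 0) (p ! 1)" using adjp[of 0] by simp
    moreover have "fst (p ! 0) = fst e" "snd (p ! 1) = snd e" using hd0 lastL L by auto
    ultimately have "p ! 0 = e \<or> p ! 1 = e" unfolding rook_adj_def by (auto simp: prod_eq_iff)
    then show False using ne L by auto
  qed
  have L3: "L \<ge> 3" using L0 L1 L2 by linarith
  define c where "c = e # p"
  have lc: "length c = L + 1" unfolding c_def L_def by simp
  have c0: "c ! 0 = e" unfolding c_def by simp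
  have cS: "\<And>k. c ! Suc k = p ! k" unfolding c_def by simp
  have dc: "distinct c"
  proof -
    have "distinct p" unfolding distinct_conv_nth L_def[symmetric]
      by (metis linorder_neqE_nat neq)
    then show ?thesis unfolding c_def using eW sp by auto
  qed
  have setc: "set c \<subseteq> insert e W" unfolding c_def using sp by auto
  have main: "rook_adj (c ! k) (c ! ((k + 1) mod length c)) \<and>
        (int (fst (c ! ((k + 2) mod length c))) - int (fst (c ! k))) *
        (int (snd (c ! ((k + 2) mod length c))) - int (snd (c ! k))) \<noteq> 0"
    if k: "k < length c" for k
  proof
    show "rook_adj (c ! k) (c ! ((k + 1) mod length c))"
    proof (cases "k < L")
      case True
      then have m: "(k + 1) mod length c = Suc k" using lc by simp
      show ?thesis
      proof (cases k)
        case 0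
        then show ?thesis using m c0 cS hd0 ne[of 0] L0 unfolding rook_adj_def by auto
      next
        case (Suc k')
        then show ?thesis using m cS adjp[of k'] True by simp
      qed
    next
      case False
      then have kL: "k = L" using k lc by simp
      then have m: "(k + 1) mod length c = 0" using lc by simp
      have "c ! k = p ! (L - 1)" using kL L0 cS by (metis Suc_diff_1)
      then show ?thesis using m c0 lastL ne[of "L - 1"] L0 unfolding rook_adj_def by auto
    qed
  next
    show "(int (fst (c ! ((k + 2) mod length c))) - int (fst (c ! k))) *
        (int (snd (c ! ((k + 2) mod length c))) - int (snd (c ! k))) \<noteq> 0"
    proof -
      consider "k = 0" | "0 < k" "k + 1 < L" | "k + 1 = L" | "k = L" using k lc by linarith
      then have "fst (c ! k) \<noteq> fst (c ! ((k + 2) mod length c)) \<and>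
                 snd (c ! k) \<noteq> snd (c ! ((k + 2) mod length c))"
      proof cases
        case 1
        then have "(k + 2) mod length c = Suc 1" using lc L3 by simp
        moreover have "1 < L - 1" "0 < (1::nat)" "1 < L" using L3 by auto
        ultimately show ?thesis using 1 c0 cS r[of 1] cl[of 1] by auto
      next
        case 2
        then have m: "(k + 2) mod length c = Suc (k + 1)" using lc by simp
        obtain k' where k': "k = Suc k'" using 2 by (cases k) auto
        show ?thesis using dif[of k' "k + 1"] m k' cS 2 by simp
      next
        case 3
        then have m: "(k + 2) mod length c = 0" using lc by simp
        obtain k' where k': "k = Suc k'" using 3 L3 by (cases k) auto
        have "0 < k'" "k' < L" "k' < L - 1" using k' 3 L3 by auto
        then show ?thesis using m k' cS c0 r[of k'] cl[of k'] by auto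
      next
        case 4
        then have "k + 2 = 1 + length c" using lc by simp
        then have m: "(k + 2) mod length c = Suc 0" using lc L3 by (simp only: mod_add_self2) simp
        obtain k' where k': "k = Suc k'" using 4 L3 by (cases k) auto
        have "0 + 2 \<le> k'" "k' < L" using k' 4 L3 by auto
        then show ?thesis using m k' cS dif[of 0 k'] by auto
      qed
      then show ?thesis using differ_prod by blast
    qed
  qed
  have "is_circuit_in (insert e W) c"
    unfolding is_circuit_in_def using lc L3 dc setc main by auto
  then show ?thesis by blast
qed


lemma exit_step: "successively rook_adj p \<Longrightarrow> p \<noteq> [] \<Longrightarrow> hd p \<in> W \<Longrightarrow> last p \<notin> W \<Longrightarrow>
   \<exists>x y. x \<in> W \<and> y \<notin> W \<and> y \<in> set p \<and> rook_adj x y"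
proof (induction p)
  case Nil then show ?case by simp
next
  case (Cons a p)
  show ?case
  proof (cases p)
    case Nil then show ?thesis using Cons.prems by simp
  next
    case (Cons b q)
    show ?thesis
    proof (cases "b \<in> W")
      case True
      have "successively rook_adj p" using Cons.prems(1) \<open>p = b # q\<close> by simp
      then obtain x y where "x \<in> W \<and> y \<notin> W \<and> y \<in> set p \<and> rook_adj x y"
        using Cons.IH True Cons.prems \<open>p = b # q\<close> by auto
      then show ?thesis by (metis list.set_intros(2))
    next
      case False
      have "a \<in> W" "rook_adj a b" using Cons.prems \<open>p = b # q\<close> by auto
      then show ?thesis using False \<open>p = b # q\<close> by (metis list.set_intros(1,2))
    qed
  qed
qed

lemma grow_adj:
  assumes "connected_set V" "W \<subseteq> V" "W \<noteq> {}" "W \<noteq> V"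
  shows "\<exists>e\<in>V - W. \<exists>w\<in>W. rook_adj w e"
proof -
  obtain w v where wv: "w \<in> W" "v \<in> V" "v \<notin> W" using assms by blast
  then have "w \<noteq> v" by blast
  then have "joined_in V w v" using assms wv unfolding connected_set_def by blast
  then obtain p where p: "is_path_in V p" "hd p = w" "last p = v" unfolding joined_in_def by blast
  then obtain x y where "x \<in> W" "y \<notin> W" "y \<in> set p" "rook_adj x y"
    using exit_step[of p W] wv by (auto simp: path_iff)
  then show ?thesis using p by (auto simp: path_iff)
qed

lemma conn_insert:
  assumes c: "connected_set W" and w: "w \<in> W" and adj: "rook_adj w e"
  shows "connected_set (insert e W)"
proof -
  have sub: "W \<subseteq> insert e W" by blast
  have ew: "joined_in (insert e W) e w" using joined_adj[of e "insert e W" w] adj w rook_adj_sym by blast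
  have wj: "joined_in (insert e W) w v" if "v \<in> W" for v
  proof (cases "w = v")
    case True then show ?thesis using joined_refl w by blast
  next
    case False then show ?thesis using c w that joined_mono[OF _ sub] unfolding connected_set_def by blast
  qed
  have ej: "joined_in (insert e W) e v" if "v \<in> W" for v using joined_trans[OF ew wj[OF that]] .
  show ?thesis unfolding connected_set_def
  proof (intro ballI impI)
    fix u v assume u: "u \<in> insert e W" and v: "v \<in> insert e W" and uv: "u \<noteq> v"
    show "joined_in (insert e W) u v"
    proof (cases "u = e")
      case True then show ?thesis using ej v uv by auto
    next
      case False
      note uW = False
      show ?thesis
      proof (cases "v = e")
        case True then show ?thesis using ej u uW joined_sym by auto
      next
        case False then show ?thesis using u v uv uW c joined_mono[OF _ sub] unfolding connected_set_def by auto
      qed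
    qed
  qed
qed

definition inv :: "cell set \<Rightarrow> bool" where
  "inv W \<longleftrightarrow> (card (fst ` W) + card (snd ` W) = card W + 1 \<and> forest W) \<or>
             (card (fst ` W) + card (snd ` W) \<le> card W \<and> \<not> forest W)"

lemma inv_step:
  assumes fin: "finite W" and c: "connected_set W" and eW: "e \<notin> W" and w: "w \<in> W"
    and adj: "rook_adj w e" and I: "inv W"
  shows "inv (insert e W)"
proof -
  have cardW: "card (insert e W) = Suc (card W)" using fin eW by simp
  have nf: "\<not> forest W \<Longrightarrow> \<not> forest (insert e W)" using forest_mono[of "insert e W" W] by blast
  consider "fst e \<in> fst ` W" "snd e \<in> snd ` W" | "fst e \<in> fst ` W" "snd e \<notin> snd ` W"
    | "fst e \<notin> fst ` W" "snd e \<in> snd ` W"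
    using w adj unfolding rook_adj_def by (metis image_eqI)
  then show ?thesis
  proof cases
    case 1
    have f: "fst ` insert e W = fst ` W" "snd ` insert e W = snd ` W" using 1 by auto
    obtain a where a: "a \<in> W" "fst a = fst e" using 1 by force
    obtain b where b: "b \<in> W" "snd b = snd e" using 1 by force
    have "a \<noteq> b" using a b eW by (metis prod.collapse)
    then have "joined_in W a b" using c a b unfolding connected_set_def by blast
    then have "\<not> forest (insert e W)" using circuit_close[OF eW a b] unfolding forest_def by blast
    then show ?thesis using I nf f cardW unfolding inv_def by auto
  next
    case 2
    have f: "card (fst ` insert e W) = card (fst ` W)" "card (snd ` insert e W) = Suc (card (snd ` W))"
      using 2 fin by (auto simp: insert_absorb)
    have "(\<forall>v\<in>W. rook_adj e v \<longrightarrow> fst v = fst e)" using 2 unfolding rook_adj_def by (metis image_eqI)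
    then have "forest W \<Longrightarrow> forest (insert e W)" using circuit_line[OF _ eW] unfolding forest_def by blast
    then show ?thesis using I nf f cardW unfolding inv_def by auto
  next
    case 3
    have f: "card (snd ` insert e W) = card (snd ` W)" "card (fst ` insert e W) = Suc (card (fst ` W))"
      using 3 fin by (auto simp: insert_absorb)
    have "(\<forall>v\<in>W. rook_adj e v \<longrightarrow> snd v = snd e)" using 3 unfolding rook_adj_def by (metis image_eqI)
    then have "forest W \<Longrightarrow> forest (insert e W)" using circuit_line[OF _ eW] unfolding forest_def by blast
    then show ?thesis using I nf f cardW unfolding inv_def by auto
  qed
qed

lemma inv_single: "inv {v}"
proof -
  have "forest {v}" unfolding forest_def is_circuit_in_def
  proof clarify
    fix c assume "4 \<le> length c" "distinct c" "set c \<subseteq> {v}"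
    then have "length c \<le> 1" using distinct_card[of c] card_mono[of "{v}" "set c"] by simp
    then show False using \<open>4 \<le> length c\<close> by simp
  qed
  then show ?thesis unfolding inv_def by simp
qed

lemma conn_inv:
  assumes fin: "finite V" and c: "connected_set V" and ne: "V \<noteq> {}"
  shows "inv V"
proof -
  have "\<forall>n. 1 \<le> n \<longrightarrow> n \<le> card V \<longrightarrow> (\<exists>W\<subseteq>V. connected_set W \<and> W \<noteq> {} \<and> card W = n \<and> inv W)"
  proof
    fix n show "1 \<le> n \<longrightarrow> n \<le> card V \<longrightarrow> (\<exists>W\<subseteq>V. connected_set W \<and> W \<noteq> {} \<and> card W = n \<and> inv W)"
    proof (induction n)
      case 0 then show ?case by simp
    next
      case (Suc n)
      show ?case
      proof (cases "n = 0")
        case True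
        obtain v where "v \<in> V" using ne by blast
        moreover have "connected_set {v}" unfolding connected_set_def by simp
        ultimately show ?thesis using True inv_single by (intro impI exI[of _ "{v}"]) auto
      next
        case False
        show ?thesis
        proof (intro impI)
          assume "Suc n \<le> card V"
          then obtain W where W: "W \<subseteq> V" "connected_set W" "W \<noteq> {}" "card W = n" "inv W"
            using Suc.IH False by auto
          have "W \<noteq> V" using W(4) \<open>Suc n \<le> card V\<close> by auto
          then obtain e w where ew: "e \<in> V - W" "w \<in> W" "rook_adj w e" using grow_adj[OF c W(1,3)] by blast
          have finW: "finite W" using W(1) fin finite_subset by blast
          have "inv (insert e W)" using inv_step[OF finW W(2) _ ew(2,3) W(5)] ew by blast
          moreover have "connected_set (insert e W)" using conn_insert[OF W(2) ew(2,3)] .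
          moreover have "card (insert e W) = Suc n" using finW ew W(4) by simp
          ultimately show "\<exists>W\<subseteq>V. connected_set W \<and> W \<noteq> {} \<and> card W = Suc n \<and> inv W"
            using W(1) ew by (intro exI[of _ "insert e W"]) auto
        qed
      qed
    qed
  qed
  then obtain W where W: "W \<subseteq> V" "card W = card V" "inv W"
    using ne fin by (metis One_nat_def Suc_leI card_gt_0_iff order_refl)
  then have "W = V" using fin card_subset_eq by blast
  then show ?thesis using W by simp
qed


lemma forest_count:
  assumes fin: "finite V" and fo: "forest V"
  shows "card (fst ` V) + card (snd ` V) = card V + card (components V)"
proof -
  define r where "r = {(u, v). u \<in> V \<and> v \<in> V \<and> joined_in V u v}"
  have cdef: "components V = V // r" unfolding components_def r_def by simp
  have eq: "equiv V r" unfolding equiv_def refl_on_def sym_def trans_def r_def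
    using joined_refl joined_sym joined_trans by blast
  define C where "C = V // r"
  have KV: "\<And>K. K \<in> C \<Longrightarrow> K \<subseteq> V" using in_quotient_imp_subset[OF eq] unfolding C_def by blast
  have finC: "finite C" using KV fin by (meson Pow_iff finite_Pow_iff finite_subset subsetI)
  have finK: "\<And>K. K \<in> C \<Longrightarrow> finite K" using KV fin finite_subset by blast
  have Kne: "\<And>K. K \<in> C \<Longrightarrow> K \<noteq> {}" using in_quotient_imp_non_empty[OF eq] unfolding C_def by blast
  have Kconn: "connected_set K" if K: "K \<in> C" for K
    unfolding connected_set_def
  proof (intro ballI impI)
    fix u v assume u: "u \<in> K" and v: "v \<in> K" and "u \<noteq> v"
    have "(u, v) \<in> r" using in_quotient_imp_in_rel[OF eq, of K u v] K u v unfolding C_def by blast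
    then obtain p where p: "is_path_in V p" "hd p = u" "last p = v" unfolding r_def joined_in_def by blast
    have "set p \<subseteq> K"
    proof
      fix x assume x: "x \<in> set p"
      have "joined_in V u x" using path_joined_elem[OF p(1) x] p(2) by simp
      then have "(u, x) \<in> r" using joined_in_V unfolding r_def by blast
      then show "x \<in> K" using in_quotient_imp_closed[OF eq, of K u x] K u unfolding C_def by blast
    qed
    then have "is_path_in K p" using p(1) unfolding is_path_in_def by blast
    then show "joined_in K u v" using p unfolding joined_in_def by blast
  qed
  have Keq: "card (fst ` K) + card (snd ` K) = card K + 1" if K: "K \<in> C" for K
  proof -
    have "forest K" using forest_mono[OF fo KV[OF K]] .
    then show ?thesis using conn_inv[OF finK[OF K] Kconn[OF K] Kne[OF K]] unfolding inv_def by blast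
  qed
  have disj: "K1 \<inter> K2 = {}" if "K1 \<in> C" "K2 \<in> C" "K1 \<noteq> K2" for K1 K2
    using quotient_disj[OF eq] that unfolding C_def by blast
  have disjf: "fst ` K1 \<inter> fst ` K2 = {} \<and> snd ` K1 \<inter> snd ` K2 = {}"
    if K: "K1 \<in> C" "K2 \<in> C" "K1 \<noteq> K2" for K1 K2
  proof -
    have no: False if u: "u \<in> K1" and v: "v \<in> K2" and h: "fst u = fst v \<or> snd u = snd v" for u v
    proof -
      have "u \<noteq> v" using disj[OF K] u v by blast
      then have "rook_adj u v" using h unfolding rook_adj_def by blast
      then have "(u, v) \<in> r" using joined_adj KV K u v unfolding r_def by blast
      then have "v \<in> K1" using in_quotient_imp_closed[OF eq, of K1 u v] K u unfolding C_def by blast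
      then show False using disj[OF K] v by blast
    qed
    show ?thesis using no by blast
  qed
  have UV: "\<Union> C = V" using Union_quotient[OF eq] unfolding C_def .
  have s1: "card V = (\<Sum>K\<in>C. card K)"
    using card_UN_disjoint[OF finC, of id] finK disj UV by simp
  have s2: "card (fst ` V) = (\<Sum>K\<in>C. card (fst ` K))"
  proof -
    have "fst ` V = (\<Union>K\<in>C. fst ` K)" using UV by blast
    then show ?thesis using card_UN_disjoint[OF finC, of "\<lambda>K. fst ` K"] finK disjf by simp
  qed
  have s3: "card (snd ` V) = (\<Sum>K\<in>C. card (snd ` K))"
  proof -
    have "snd ` V = (\<Union>K\<in>C. snd ` K)" using UV by blast
    then show ?thesis using card_UN_disjoint[OF finC, of "\<lambda>K. snd ` K"] finK disjf by simp
  qed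
  have "card (fst ` V) + card (snd ` V) = (\<Sum>K\<in>C. card (fst ` K) + card (snd ` K))"
    using s2 s3 by (simp add: sum.distrib)
  also have "\<dots> = (\<Sum>K\<in>C. card K + 1)" using Keq by simp
  also have "\<dots> = (\<Sum>K\<in>C. card K) + (\<Sum>K\<in>C. (1::nat))" by (rule sum.distrib)
  also have "\<dots> = card V + card C" using s1 by simp
  finally show ?thesis using cdef C_def by simp
qed

theorem proposition1p1:
  fixes m n :: nat and V :: "(nat \<times> nat) set"
  assumes "m \<ge> 2" and "n \<ge> 2" and "V \<subseteq> grid m n"
  shows "(\<forall>k. forest V \<and> card (components V) = k \<longrightarrow>
            (complete m n V \<longleftrightarrow> int (card V) = int m + int n - int k))
       \<and> (card V = m + n - 1 \<longrightarrow> (tree V \<longleftrightarrow> complete m n V \<and> connected_set V))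
       \<and> (complete m n V \<and> connected_set V \<longrightarrow>
            card V \<ge> m + n - 1 \<and> (card V = m + n - 1 \<longleftrightarrow> tree V))"
proof -
  have fin: "finite V" using assms(3) finite_subset unfolding grid_def by blast
  have R: "fst ` V \<subseteq> {1..m}" and Cs: "snd ` V \<subseteq> {1..n}" using assms(3) unfolding grid_def by auto
  have cR: "card (fst ` V) \<le> m" using card_mono[OF _ R] by simp
  have cC: "card (snd ` V) \<le> n" using card_mono[OF _ Cs] by simp
  have comp: "complete m n V \<longleftrightarrow> card (fst ` V) + card (snd ` V) = m + n"
  proof
    assume "complete m n V" then show "card (fst ` V) + card (snd ` V) = m + n"
      unfolding complete_def by simp
  next
    assume h: "card (fst ` V) + card (snd ` V) = m + n"
    then have "card (fst ` V) = card {1..m}" "card (snd ` V) = card {1..n}" using cR cC by auto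
    then show "complete m n V" unfolding complete_def
      using card_subset_eq[OF _ R] card_subset_eq[OF _ Cs] by simp
  qed
  have ne_c: "complete m n V \<Longrightarrow> V \<noteq> {}" using assms(1) unfolding complete_def by auto
  have P1: "\<forall>k. forest V \<and> card (components V) = k \<longrightarrow>
            (complete m n V \<longleftrightarrow> int (card V) = int m + int n - int k)"
  proof (intro allI impI)
    fix k assume h: "forest V \<and> card (components V) = k"
    then have "card (fst ` V) + card (snd ` V) = card V + k" using forest_count[OF fin] by simp
    then show "complete m n V \<longleftrightarrow> int (card V) = int m + int n - int k" using comp by linarith
  qed
  have P2: "card V = m + n - 1 \<longrightarrow> (tree V \<longleftrightarrow> complete m n V \<and> connected_set V)"
  proof
    assume cV: "card V = m + n - 1"
    then have ne: "V \<noteq> {}" using assms(1,2) by auto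
    show "tree V \<longleftrightarrow> complete m n V \<and> connected_set V"
    proof
      assume t: "tree V"
      then have "inv V" using conn_inv[OF fin _ ne] unfolding tree_def by blast
      then have "card (fst ` V) + card (snd ` V) = card V + 1" using t unfolding inv_def tree_def by blast
      then show "complete m n V \<and> connected_set V" using t comp cV assms(1,2) unfolding tree_def by simp
    next
      assume h: "complete m n V \<and> connected_set V"
      then have "inv V" using conn_inv[OF fin _ ne] by blast
      moreover have "card (fst ` V) + card (snd ` V) = m + n" using h comp by simp
      ultimately have "forest V" unfolding inv_def using cV assms(1,2) by auto
      then show "tree V" using h unfolding tree_def by blast
    qed
  qed
  have P3: "complete m n V \<and> connected_set V \<longrightarrow>
            card V \<ge> m + n - 1 \<and> (card V = m + n - 1 \<longleftrightarrow> tree V)"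
  proof
    assume h: "complete m n V \<and> connected_set V"
    then have "inv V" using conn_inv[OF fin _ ne_c] by blast
    moreover have "card (fst ` V) + card (snd ` V) = m + n" using h comp by simp
    ultimately have "(m + n = card V + 1 \<and> forest V) \<or> (m + n \<le> card V \<and> \<not> forest V)"
      unfolding inv_def by simp
    then show "card V \<ge> m + n - 1 \<and> (card V = m + n - 1 \<longleftrightarrow> tree V)"
      using h assms(1,2) unfolding tree_def by auto
  qed
  show ?thesis using P1 P2 P3 by blast
qed

end
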